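(* Let $k\ge3$. At any $\tau\ge1$, for any pairwise distinct $i,j,r\in[d]$, $$\frac{\mathbb{P}[i,j,r\in B_\tau]}{\mathbb{P}[i,j\in B_\tau]\cdot\mathbb{P}[i,r\in B_\tau]}\le\frac{d-1}{k-1}.$$
   Context: Integers $3\le k\le d-3$, $[d]=\{1,\dots,d\}$. SAMPLING$(k,d,\mathbf{w})$ for nonzero $\mathbf{w}\in\mathbb{R}^d$: with $q_i=|w_i|/\|\mathbf{w}\|_1$, draw $I_1\in[d]$ with $\mathbb{P}(I_1=i)=q_i$, then $k-1$ distinct indices uniformly without replacement from $[d]\setminus\{I_1\}$; output the $k$-set $B$. At round $\tau$, $B_\tau=$SAMPLING$(k,d,\hat{\mathbf{w}}_{\tau-1})$ for a nonzero vector $\hat{\mathbf{w}}_{\tau-1}\in\mathbb{R}^d$ determined by $B_1,\dots,B_{\tau-1}$ (with $\hat{\mathbf{w}}_0=\frac1d\mathbf{1}_d$); probabilities are over $B_\tau$ conditional on $B_1,\dots,B_{\tau-1}$. *)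

theory Defs
  imports "HOL-Probability.Probability"
begin

definition first_index_pmf :: "nat \<Rightarrow> (nat \<Rightarrow> real) \<Rightarrow> nat pmf" where
  "first_index_pmf d w =
     embed_pmf (\<lambda>i. if i \<in> {1..d} then \<bar>w i\<bar> / (\<Sum>j\<in>{1..d}. \<bar>w j\<bar>) else 0)"

text \<open>SAMPLING(k,d,w): draw I_1, then k-1 distinct indices uniformly without
  replacement from [d] minus I_1 (equivalently a uniform (k-1)-subset); output the k-set.\<close>
definition sampling_pmf :: "nat \<Rightarrow> nat \<Rightarrow> (nat \<Rightarrow> real) \<Rightarrow> nat set pmf" where
  "sampling_pmf k d w =
     bind_pmf (first_index_pmf d w)
       (\<lambda>i. map_pmf (insert i)
              (pmf_of_set {A. A \<subseteq> {1..d} - {i} \<and> card A = k - 1}))"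

end

theory Submission
  imports Defs
begin

lemma card_supsets:
  assumes U: "finite U" and SU: "S \<subseteq> U"
  shows "card {A. A \<subseteq> U \<and> card A = m \<and> S \<subseteq> A} =
         (if card S \<le> m then (card U - card S) choose (m - card S) else 0)"
proof (cases "card S \<le> m")
  case True
  have fS: "finite S" using U SU finite_subset by blast
  have eq: "{A. A \<subseteq> U \<and> card A = m \<and> S \<subseteq> A} =
        (\<lambda>B. B \<union> S) ` {B. B \<subseteq> U - S \<and> card B = m - card S}"
  proof (rule set_eqI, rule iffI)
    fix A assume A: "A \<in> {A. A \<subseteq> U \<and> card A = m \<and> S \<subseteq> A}"
    hence "A = (A - S) \<union> S" by auto
    moreover have "card (A - S) = m - card S"
      using A fS by (simp add: card_Diff_subset)
    ultimately show "A \<in> (\<lambda>B. B \<union> S) ` {B. B \<subseteq> U - S \<and> card B = m - card S}"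
      using A by blast
  next
    fix A assume "A \<in> (\<lambda>B. B \<union> S) ` {B. B \<subseteq> U - S \<and> card B = m - card S}"
    then obtain B where B: "B \<subseteq> U - S" "card B = m - card S" "A = B \<union> S" by blast
    have fB: "finite B" using B(1) U finite_subset by blast
    have "B \<inter> S = {}" using B(1) by blast
    hence "card A = card B + card S" using B fB fS by (simp add: card_Un_disjoint)
    thus "A \<in> {A. A \<subseteq> U \<and> card A = m \<and> S \<subseteq> A}" using B SU True by auto
  qed
  have inj: "inj_on (\<lambda>B. B \<union> S) {B. B \<subseteq> U - S \<and> card B = m - card S}"
    by (rule inj_onI) blast
  have "card {A. A \<subseteq> U \<and> card A = m \<and> S \<subseteq> A} = card {B. B \<subseteq> U - S \<and> card B = m - card S}"
    unfolding eq by (rule card_image[OF inj])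
  also have "\<dots> = card (U - S) choose (m - card S)" using U by (simp add: n_subsets)
  also have "card (U - S) = card U - card S" using SU fS by (simp add: card_Diff_subset)
  finally show ?thesis using True by simp
next
  case False
  have E: "{A. A \<subseteq> U \<and> card A = m \<and> S \<subseteq> A} = {}"
  proof (rule ccontr)
    assume "{A. A \<subseteq> U \<and> card A = m \<and> S \<subseteq> A} \<noteq> {}"
    then obtain A where A: "A \<subseteq> U" "card A = m" "S \<subseteq> A" by blast
    have "finite A" using A U finite_subset by blast
    hence "card S \<le> card A" using A card_mono by blast
    thus False using A False by simp
  qed
  show ?thesis unfolding E using False by simp
qed

definition Hf :: "nat \<Rightarrow> nat \<Rightarrow> nat \<Rightarrow> real" where
  "Hf k d t = (if t \<le> k - 1 then real ((d - 1 - t) choose (k - 1 - t)) else 0)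
              / real ((d - 1) choose (k - 1))"

lemma prob_inner:
  assumes x: "x \<in> {1..d}" and S: "S \<subseteq> {1..d}" and kd: "k \<le> d"
  shows "measure_pmf.prob (map_pmf (insert x)
            (pmf_of_set {A. A \<subseteq> {1..d} - {x} \<and> card A = k - 1})) {B. S \<subseteq> B}
         = Hf k d (card (S - {x}))"
proof -
  let ?U = "{A. A \<subseteq> {1..d} - {x} \<and> card A = k - 1}"
  have cU: "card ({1..d} - {x}) = d - 1" using x by simp
  have fin: "finite ?U" by simp
  have cardU: "card ?U = (d - 1) choose (k - 1)"
    using n_subsets[of "{1..d} - {x}" "k - 1"] cU by simp
  have ne: "?U \<noteq> {}"
  proof
    assume "?U = {}"
    hence "card ?U = 0" by (simp only: card.empty)
    hence "(d - 1) choose (k - 1) = 0" using cardU by argo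
    hence "d - 1 < k - 1" by (simp add: binomial_eq_0_iff)
    thus False using kd by simp
  qed
  have I: "?U \<inter> (insert x -` {B. S \<subseteq> B}) =
       {A. A \<subseteq> {1..d} - {x} \<and> card A = k - 1 \<and> S - {x} \<subseteq> A}" by auto
  have "card (?U \<inter> (insert x -` {B. S \<subseteq> B})) =
        (if card (S - {x}) \<le> k - 1 then (card ({1..d} - {x}) - card (S - {x})) choose (k - 1 - card (S - {x})) else 0)"
    unfolding I by (rule card_supsets) (use S in auto)
  also have "\<dots> = (if card (S - {x}) \<le> k - 1 then (d - 1 - card (S - {x})) choose (k - 1 - card (S - {x})) else 0)"
    using cU by simp
  finally have C: "card (?U \<inter> (insert x -` {B. S \<subseteq> B})) = \<dots>" .
  show ?thesis
    unfolding measure_map_pmf measure_pmf_of_set[OF ne fin] C cardU Hf_def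
    by (simp add: of_nat_def)
qed

lemma first_pmf:
  assumes nz: "\<exists>l\<in>{1..d}. w l \<noteq> 0"
  shows "pmf (first_index_pmf d w) x =
           (if x \<in> {1..d} then \<bar>w x\<bar> / (\<Sum>j\<in>{1..d}. \<bar>w j\<bar>) else 0)"
    and "set_pmf (first_index_pmf d w) \<subseteq> {1..d}"
proof -
  let ?W = "\<Sum>j\<in>{1..d}. \<bar>w j\<bar>"
  let ?f = "\<lambda>i. if i \<in> {1..d} then \<bar>w i\<bar> / ?W else 0"
  obtain l where l: "l \<in> {1..d}" "w l \<noteq> 0" using nz by blast
  have "\<bar>w l\<bar> \<le> ?W" using l by (intro member_le_sum) auto
  hence Wpos: "?W > 0" using l by simp
  have nn: "\<And>i. 0 \<le> ?f i" using Wpos by simp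
  have "(\<integral>\<^sup>+ x. ennreal (?f x) \<partial>count_space UNIV) = (\<Sum>x\<in>{1..d}. ennreal (?f x))"
    by (rule nn_integral_count_space') auto
  also have "\<dots> = ennreal (\<Sum>x\<in>{1..d}. ?f x)"
    using nn by (simp add: sum_ennreal)
  also have "(\<Sum>x\<in>{1..d}. ?f x) = (\<Sum>x\<in>{1..d}. \<bar>w x\<bar> / ?W)" by simp
  also have "\<dots> = 1" using Wpos by (simp add: sum_divide_distrib[symmetric])
  finally have one: "(\<integral>\<^sup>+ x. ennreal (?f x) \<partial>count_space UNIV) = 1" by simp
  show "pmf (first_index_pmf d w) x = ?f x"
    unfolding first_index_pmf_def by (rule pmf_embed_pmf[OF nn one])
  show "set_pmf (first_index_pmf d w) \<subseteq> {1..d}"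
    unfolding first_index_pmf_def set_embed_pmf[OF nn one] by auto
qed

lemma prob_sampling:
  assumes nz: "\<exists>l\<in>{1..d}. w l \<noteq> 0" and S: "S \<subseteq> {1..d}" and kd: "k \<le> d"
  shows "measure_pmf.prob (sampling_pmf k d w) {B. S \<subseteq> B} =
     (\<Sum>x\<in>{1..d}. \<bar>w x\<bar> / (\<Sum>j\<in>{1..d}. \<bar>w j\<bar>) * Hf k d (card (S - {x})))"
proof -
  let ?W = "\<Sum>j\<in>{1..d}. \<bar>w j\<bar>"
  let ?g = "\<lambda>i. map_pmf (insert i) (pmf_of_set {A. A \<subseteq> {1..d} - {i} \<and> card A = k - 1})"
  have "ennreal (measure_pmf.prob (sampling_pmf k d w) {B. S \<subseteq> B})
      = emeasure (measure_pmf (sampling_pmf k d w)) {B. S \<subseteq> B}"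
    by (simp add: measure_pmf.emeasure_eq_measure)
  also have "\<dots> = (\<integral>\<^sup>+x. emeasure (measure_pmf (?g x)) {B. S \<subseteq> B} \<partial>measure_pmf (first_index_pmf d w))"
    unfolding sampling_pmf_def by simp
  also have "\<dots> = (\<Sum>x\<in>{1..d}. emeasure (measure_pmf (?g x)) {B. S \<subseteq> B} * pmf (first_index_pmf d w) x)"
    by (rule nn_integral_measure_pmf_support) (use first_pmf(2)[OF nz] in auto)
  also have "\<dots> = (\<Sum>x\<in>{1..d}. ennreal (\<bar>w x\<bar> / ?W * Hf k d (card (S - {x}))))"
  proof (rule sum.cong[OF refl])
    fix x assume x: "x \<in> {1..d}"
    have "emeasure (measure_pmf (?g x)) {B. S \<subseteq> B} = ennreal (Hf k d (card (S - {x})))"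
      using prob_inner[OF x S kd] by (simp add: measure_pmf.emeasure_eq_measure)
    moreover have "pmf (first_index_pmf d w) x = \<bar>w x\<bar> / ?W" using first_pmf(1)[OF nz, of x] x by simp
    moreover have "Hf k d (card (S - {x})) \<ge> 0" by (simp add: Hf_def)
    moreover have "0 \<le> \<bar>w x\<bar> / ?W" by (simp add: sum_nonneg)
    ultimately show "emeasure (measure_pmf (?g x)) {B. S \<subseteq> B} * pmf (first_index_pmf d w) x
          = ennreal (\<bar>w x\<bar> / ?W * Hf k d (card (S - {x})))"
      by (metis ennreal_mult mult.commute)
  qed
  also have "\<dots> = ennreal (\<Sum>x\<in>{1..d}. \<bar>w x\<bar> / ?W * Hf k d (card (S - {x})))"
    by (rule sum_ennreal) (simp add: Hf_def)
  finally show ?thesis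
    by (subst (asm) ennreal_inj) (auto intro!: sum_nonneg simp: Hf_def)
qed

lemma Hf_step:
  assumes "t + 1 \<le> k - 1" and "k \<le> d"
  shows "Hf k d (t + 1) * real (d - 1 - t) = Hf k d t * real (k - 1 - t)"
proof -
  define n' where "n' = d - 1 - t - 1"
  define k' where "k' = k - 1 - t - 1"
  have e1: "Suc n' = d - 1 - t" and e2: "Suc k' = k - 1 - t" and e3: "n' = d - 1 - (t+1)" and e4: "k' = k - 1 - (t+1)"
    using assms unfolding n'_def k'_def by auto
  have "Suc n' * (n' choose k') = (Suc n' choose Suc k') * Suc k'" by (rule Suc_times_binomial_eq)
  hence "real (Suc n') * real (n' choose k') = real (Suc n' choose Suc k') * real (Suc k')"
    by (metis of_nat_mult)
  hence H: "real (d - 1 - t) * real (n' choose k') = real ((d - 1 - t) choose (k - 1 - t)) * real (k - 1 - t)"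
    unfolding e1 e2 .
  define Z where "Z = real ((d - 1) choose (k - 1))"
  have A: "Hf k d (t + 1) = real (n' choose k') / Z"
    unfolding Hf_def Z_def e3 e4 using assms by simp
  have B: "Hf k d t = real ((d - 1 - t) choose (k - 1 - t)) / Z"
    unfolding Hf_def Z_def using assms by simp
  have "Hf k d (t + 1) * real (d - 1 - t) = (real (d - 1 - t) * real (n' choose k')) / Z"
    unfolding A by simp
  also have "\<dots> = (real ((d - 1 - t) choose (k - 1 - t)) * real (k - 1 - t)) / Z" unfolding H ..
  also have "\<dots> = Hf k d t * real (k - 1 - t)" unfolding B by simp
  finally show ?thesis .
qed

lemma Hf0: assumes "k \<le> d" shows "Hf k d 0 = 1"
proof -
  have "(d - 1) choose (k - 1) \<noteq> 0" using assms by (simp add: binomial_eq_0_iff)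
  thus ?thesis unfolding Hf_def by simp
qed

lemma sum_split:
  fixes q :: "nat \<Rightarrow> real"
  assumes "finite D" "T \<subseteq> D"
  shows "(\<Sum>x\<in>D. q x * (if x \<in> T then \<alpha> else \<beta>)) = \<alpha> * sum q T + \<beta> * (sum q D - sum q T)"
proof -
  have "(\<Sum>x\<in>D. q x * (if x \<in> T then \<alpha> else \<beta>)) = (\<Sum>x\<in>D. (if x \<in> T then q x * \<alpha> else q x * \<beta>))"
    by (rule sum.cong) auto
  also have "\<dots> = (\<Sum>x\<in>D \<inter> {x. x \<in> T}. q x * \<alpha>) + (\<Sum>x\<in>D \<inter> - {x. x \<in> T}. q x * \<beta>)"
    by (rule sum.If_cases) (rule assms)
  also have "D \<inter> {x. x \<in> T} = T" using assms by auto
  also have "D \<inter> - {x. x \<in> T} = D - T" by auto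
  also have "(\<Sum>x\<in>D - T. q x * \<beta>) = \<beta> * (sum q D - sum q T)"
    using assms by (simp add: sum_diff sum_distrib_left[symmetric] right_diff_distrib mult.commute)
  finally show ?thesis by (simp add: sum_distrib_left mult.commute)
qed

lemma real_ineq:
  fixes n m a b c qi qj qr :: real
  assumes mn: "m + 2 \<le> n" and m2: "2 \<le> m"
    and a: "a = m / n" and b: "b * (n - 1) = a * (m - 1)" and c: "c * (n - 2) = b * (m - 2)"
    and q: "0 \<le> qi" "0 \<le> qj" "0 \<le> qr" "qi + qj + qr \<le> 1"
  shows "(b * (qi + qj + qr) + c * (1 - (qi + qj + qr))) /
         ((a * (qi + qj) + b * (1 - (qi + qj))) * (a * (qi + qr) + b * (1 - (qi + qr)))) \<le> n / m"
proof -
  define s where "s = qi + qj + qr"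
  define x where "x = qi + qj"
  define y where "y = qi + qr"
  have apos: "a > 0" using a mn m2 by simp
  have bdef: "b = a * (m - 1) / (n - 1)" using b mn m2 eq_divide_eq[of b "a * (m - 1)" "n - 1"] by auto
  have bpos: "b > 0" unfolding bdef using apos mn m2 by simp
  have ba: "b \<le> a" unfolding bdef using apos mn m2 by (simp add: field_simps)
  have cdef: "c = b * (m - 2) / (n - 2)" using c mn m2 eq_divide_eq[of c "b * (m - 2)" "n - 2"] by auto
  have cnn: "c \<ge> 0" unfolding cdef using bpos mn m2 by simp
  have frac: "(m - 2) / (n - 2) \<le> (m - 1) / (n - 1)" using mn m2
    by (simp add: field_simps) 
  have ca: "c * a \<le> b * b"
  proof -
    have "c * a = b * a * ((m - 2) / (n - 2))" unfolding cdef by simp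
    also have "\<dots> \<le> b * a * ((m - 1) / (n - 1))"
      using frac bpos apos by (intro mult_left_mono) auto
    also have "\<dots> = b * b" unfolding bdef by simp
    finally show ?thesis .
  qed
  have x0: "0 \<le> x" "0 \<le> y" "s \<le> x + y" "s \<le> 1" "0 \<le> s"
    using q unfolding s_def x_def y_def by auto
  have P1: "x * a + (1 - x) * b = b + x * (a - b)" by (simp add: algebra_simps)
  have P2: "y * a + (1 - y) * b = b + y * (a - b)" by (simp add: algebra_simps)
  have P1pos: "b + x * (a - b) \<ge> b" using x0 ba by simp
  have P2pos: "b + y * (a - b) \<ge> b" using x0 ba by simp
  define D where "D = (b + x * (a - b)) * (b + y * (a - b))"
  have Dpos: "D > 0" unfolding D_def using P1pos P2pos bpos
    by (metis less_le_trans mult_pos_pos)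
  have "D = b * b + (x + y) * b * (a - b) + x * y * ((a - b) * (a - b))"
    unfolding D_def by (simp add: algebra_simps)
  also have "\<dots> \<ge> b * b + s * b * (a - b)"
  proof -
    have "x * y * ((a - b) * (a - b)) \<ge> 0" using x0 by simp
    moreover have "(x + y) * (b * (a - b)) \<ge> s * (b * (a - b))"
      using x0 bpos ba by (intro mult_right_mono) auto
    ultimately show ?thesis by (simp add: algebra_simps)
  qed
  finally have Dge: "D \<ge> b * b + s * b * (a - b)" .
  have "a * (s * b + (1 - s) * c) = s * a * b + (1 - s) * (c * a)" by (simp add: algebra_simps)
  also have "\<dots> \<le> s * a * b + (1 - s) * (b * b)"
    using ca x0 by (intro add_left_mono mult_left_mono) auto
  also have "\<dots> = b * b + s * b * (a - b)" by (simp add: algebra_simps)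
  finally have num: "a * (s * b + (1 - s) * c) \<le> D" using Dge by linarith
  have "(s * b + (1 - s) * c) / D \<le> 1 / a"
    using num Dpos apos by (simp add: field_simps)
  also have "1 / a = n / m" using a by simp
  finally have F: "(s * b + (1 - s) * c) / D \<le> n / m" .
  have E: "((a * (qi + qj) + b * (1 - (qi + qj))) * (a * (qi + qr) + b * (1 - (qi + qr)))) = D"
    unfolding D_def x_def y_def by (simp add: algebra_simps)
  have E': "b * (qi + qj + qr) + c * (1 - (qi + qj + qr)) = s * b + (1 - s) * c"
    unfolding s_def by (simp add: algebra_simps)
  show ?thesis unfolding E E' by (rule F)
qed

lemma prob_formula:
  assumes nz: "\<exists>l\<in>{1..d}. w l \<noteq> 0" and S: "S \<subseteq> {1..d}" and kd: "k \<le> d"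
  shows "measure_pmf.prob (sampling_pmf k d w) {B. S \<subseteq> B} =
     Hf k d (card S - 1) * (\<Sum>x\<in>S. \<bar>w x\<bar> / (\<Sum>j\<in>{1..d}. \<bar>w j\<bar>))
     + Hf k d (card S) * (1 - (\<Sum>x\<in>S. \<bar>w x\<bar> / (\<Sum>j\<in>{1..d}. \<bar>w j\<bar>)))"
proof -
  let ?W = "\<Sum>j\<in>{1..d}. \<bar>w j\<bar>"
  let ?q = "\<lambda>x. \<bar>w x\<bar> / ?W"
  obtain l where l: "l \<in> {1..d}" "w l \<noteq> 0" using nz by blast
  have "\<bar>w l\<bar> \<le> ?W" using l by (intro member_le_sum) auto
  hence Wpos: "?W > 0" using l by simp
  have sum1: "sum ?q {1..d} = 1" using Wpos by (simp add: sum_divide_distrib[symmetric])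
  have fS: "finite S" using S finite_subset by blast
  have "measure_pmf.prob (sampling_pmf k d w) {B. S \<subseteq> B} =
     (\<Sum>x\<in>{1..d}. ?q x * Hf k d (card (S - {x})))" by (rule prob_sampling[OF nz S kd])
  also have "\<dots> = (\<Sum>x\<in>{1..d}. ?q x * (if x \<in> S then Hf k d (card S - 1) else Hf k d (card S)))"
    by (rule sum.cong) (auto simp: fS)
  also have "\<dots> = Hf k d (card S - 1) * sum ?q S + Hf k d (card S) * (sum ?q {1..d} - sum ?q S)"
    by (rule sum_split) (use S in auto)
  finally show ?thesis unfolding sum1 .
qed

theorem lemma11:
  fixes k d i j r :: nat and w :: "nat \<Rightarrow> real"
  assumes "3 \<le> k" and "k + 3 \<le> d"
    and "\<exists>l\<in>{1..d}. w l \<noteq> 0"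
    and "i \<in> {1..d}" and "j \<in> {1..d}" and "r \<in> {1..d}"
    and "i \<noteq> j" and "i \<noteq> r" and "j \<noteq> r"
  shows "measure_pmf.prob (sampling_pmf k d w) {B. {i, j, r} \<subseteq> B}
         / (measure_pmf.prob (sampling_pmf k d w) {B. {i, j} \<subseteq> B}
            * measure_pmf.prob (sampling_pmf k d w) {B. {i, r} \<subseteq> B})
         \<le> (real d - 1) / (real k - 1)"
proof -
  let ?W = "\<Sum>j\<in>{1..d}. \<bar>w j\<bar>"
  let ?q = "\<lambda>x. \<bar>w x\<bar> / ?W"
  have kd: "k \<le> d" using assms by simp
  obtain l where l: "l \<in> {1..d}" "w l \<noteq> 0" using assms(3) by blast
  have "\<bar>w l\<bar> \<le> ?W" using l by (intro member_le_sum) auto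
  hence Wpos: "?W > 0" using l by simp
  have qnn: "\<And>x. 0 \<le> ?q x" using Wpos by simp
  have "sum ?q {i, j, r} \<le> sum ?q {1..d}"
    by (rule sum_mono2) (use assms qnn in auto)
  also have "sum ?q {1..d} = 1" using Wpos by (simp add: sum_divide_distrib[symmetric])
  finally have s1: "?q i + ?q j + ?q r \<le> 1" using assms by simp
  have P3: "measure_pmf.prob (sampling_pmf k d w) {B. {i, j, r} \<subseteq> B} =
      Hf k d 2 * (?q i + ?q j + ?q r) + Hf k d 3 * (1 - (?q i + ?q j + ?q r))"
    using prob_formula[OF assms(3) _ kd, of "{i, j, r}"] assms by (simp add: add.assoc eval_nat_numeral)
  have P2a: "measure_pmf.prob (sampling_pmf k d w) {B. {i, j} \<subseteq> B} =
      Hf k d 1 * (?q i + ?q j) + Hf k d 2 * (1 - (?q i + ?q j))"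
    using prob_formula[OF assms(3) _ kd, of "{i, j}"] assms by (simp add: eval_nat_numeral)
  have P2b: "measure_pmf.prob (sampling_pmf k d w) {B. {i, r} \<subseteq> B} =
      Hf k d 1 * (?q i + ?q r) + Hf k d 2 * (1 - (?q i + ?q r))"
    using prob_formula[OF assms(3) _ kd, of "{i, r}"] assms by (simp add: eval_nat_numeral)
  have h0: "Hf k d 0 = 1" by (rule Hf0[OF kd])
  have h1: "Hf k d 1 * (real d - 1) = real k - 1"
    using Hf_step[of 0 k d] assms h0 by (simp add: of_nat_diff)
  have h2: "Hf k d 2 * (real d - 1 - 1) = Hf k d 1 * (real k - 1 - 1)"
  proof -
    have e: "Hf k d (1 + 1) * real (d - 1 - 1) = Hf k d 1 * real (k - 1 - 1)"
      by (rule Hf_step) (use assms in auto)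
    have "real (d - 1 - 1) = real d - 1 - 1" "real (k - 1 - 1) = real k - 1 - 1" "(1::nat) + 1 = 2"
      using assms by (auto simp: of_nat_diff)
    thus ?thesis using e by (simp add: numeral_2_eq_2)
  qed
  have h3: "Hf k d 3 * (real d - 1 - 2) = Hf k d 2 * (real k - 1 - 2)"
  proof (cases "4 \<le> k")
    case True
    have e: "Hf k d (2 + 1) * real (d - 1 - 2) = Hf k d 2 * real (k - 1 - 2)"
      by (rule Hf_step) (use assms True in auto)
    have "real (d - 1 - 2) = real d - 1 - 2" "real (k - 1 - 2) = real k - 1 - 2" "(2::nat) + 1 = 3"
      using assms True by (auto simp: of_nat_diff)
    thus ?thesis using e by (simp add: numeral_2_eq_2 numeral_3_eq_3)
  next
    case False
    hence "k = 3" using assms by simp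
    thus ?thesis by (simp add: Hf_def)
  qed
  have a: "Hf k d 1 = (real k - 1) / (real d - 1)"
    using h1 assms by (simp add: eq_divide_eq)
  show ?thesis
    unfolding P3 P2a P2b
    by (rule real_ineq[where n = "real d - 1" and m = "real k - 1", OF _ _ a _ _ qnn qnn qnn s1])
       (use assms h2 h3 in auto)
qed

end
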